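(* Let $\Pi=((p_1,\dots,p_n),(P_1,\dots,P_n),(d_1,\dots,d_n))$ be an $n$-pod. (1) Suppose $\beta\in B_\Pi$ is a butterfly bond of $\Pi$, with left and right vectors $L,R\in S^2$. Then, up to a permutation of the indices $1,\dots,n$, there exists $m\le n$ such that $p_1,\dots,p_m$ lie on a line parallel to $L$ and $P_{m+1},\dots,P_n$ lie on a line parallel to $R$. (2) Conversely, let $L,R\in S^2$ and $m\le n$ be such that $p_1,\dots,p_m$ lie on a line parallel to $L$ and $P_{m+1},\dots,P_n$ lie on a line parallel to $R$. Then $\Pi$ has a butterfly bond with left vector $L$ and right vector $R$.
   Context: An $n$-pod is a triple of platform points $p_i\in\mathbb{R}^3$, base points $P_i\in\mathbb{R}^3$ and leg lengths $d_i\ge0$. Write a direct isometry as $v\mapsto Mv+y$ ($M\in SO(3)$) and put $x=-M^ty$, $r=\langle y,y\rangle$. It corresponds to $(h:M:x:y:r)=(1:m_{11}:\dots:m_{33}:x_1:x_2:x_3:y_1:y_2:y_3:r)\in\mathbb{P}^{16}_{\mathbb{C}}$. $X$ is the complex Zariski closure of all such points. Throughout, $\langle u,u'\rangle=u^tu'$ is the complex bilinear form on $\mathbb{C}^3$. Let $l_i$ be the linear form $$-d_i^2h+(\langle p_i,p_i\rangle+\langle P_i,P_i\rangle)h+r-2\langle p_i,x\rangle-2\langle y,P_i\rangle-2\langle Mp_i,P_i\rangle.$$ Define: - $K_\Pi=X\cap\{l_1=\dots=l_n=0\}$; - $B=X\cap\{h=0\}$; - the set of bonds $B_\Pi=K_\Pi\cap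 B$. A point $\beta=(0:M:x:y:r)\in B$ is a butterfly point if $M\neq0$ and $rM+2yx^t=0$. A butterfly bond is a bond which is a butterfly point. Left and right vectors. For a butterfly point, $M=vw^t$ with $v,w\in\mathbb{C}^3$ nonzero and isotropic ($\langle v,v\rangle=\langle w,w\rangle=0$). For nonzero isotropic $u=(\alpha,\beta',\gamma)$, define $S(u)\in S^2$ in two steps. - First map $u$ to $\mathbb{P}^1_{\mathbb{C}}$: send it to $(\alpha-i\beta':\gamma)$ if $(i\alpha+\beta',\gamma)\ne(0,0)$, and to $(\gamma:-\alpha-i\beta')$ otherwise. - Then apply $(0:1)\mapsto(0,0,1)$ and $(1:a+ib)\mapsto\frac{1}{a^2+b^2+1}(2a,2b,a^2+b^2-1)$. The left vector is $L=S(w)$ and the right vector is $R=S(v)$. *)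

theory Defs
  imports "HOL-Analysis.Analysis"
begin

text \<open>Points of the affine cone over P^16: (h, M, x, y, r).\<close>
type_synonym pt = "complex \<times> (complex^3^3) \<times> (complex^3) \<times> (complex^3) \<times> complex"

definition pt_zero :: pt where
  "pt_zero = (0, 0, 0, 0, 0)"

definition pscale :: "complex \<Rightarrow> pt \<Rightarrow> pt" where
  "pscale c z = (case z of (h, M, x, y, r) \<Rightarrow>
     (c * h, \<chi> i j. c * M$i$j, \<chi> i. c * x$i, \<chi> i. c * y$i, c * r))"

text \<open>Complex bilinear form on C^3 (not Hermitian).\<close>
definition cdot :: "complex^3 \<Rightarrow> complex^3 \<Rightarrow> complex" where
  "cdot u v = (\<Sum>i\<in>UNIV. u$i * v$i)"

definition outer :: "complex^3 \<Rightarrow> complex^3 \<Rightarrow> complex^3^3" where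
  "outer v w = (\<chi> i j. v$i * w$j)"

definition cvec :: "real^3 \<Rightarrow> complex^3" where
  "cvec v = (\<chi> i. complex_of_real (v$i))"

definition cmat :: "real^3^3 \<Rightarrow> complex^3^3" where
  "cmat A = (\<chi> i j. complex_of_real (A$i$j))"

definition SO3 :: "(real^3^3) set" where
  "SO3 = {A. orthogonal_matrix A \<and> det A = 1}"

text \<open>The point (1 : M : x : y : r) attached to the direct isometry v \<mapsto> M v + y.\<close>
definition iso_point :: "real^3^3 \<Rightarrow> real^3 \<Rightarrow> pt" where
  "iso_point A t = (1, cmat A, cvec (- (transpose A *v t)), cvec t, complex_of_real (t \<bullet> t))"

inductive cpoly :: "(pt \<Rightarrow> complex) \<Rightarrow> bool" where
  cp_const: "cpoly (\<lambda>_. c)"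
| cp_h: "cpoly (\<lambda>(h, M, x, y, r). h)"
| cp_M: "cpoly (\<lambda>(h, M, x, y, r). M$i$j)"
| cp_x: "cpoly (\<lambda>(h, M, x, y, r). x$i)"
| cp_y: "cpoly (\<lambda>(h, M, x, y, r). y$i)"
| cp_r: "cpoly (\<lambda>(h, M, x, y, r). r)"
| cp_add: "cpoly f \<Longrightarrow> cpoly g \<Longrightarrow> cpoly (\<lambda>z. f z + g z)"
| cp_mult: "cpoly f \<Longrightarrow> cpoly g \<Longrightarrow> cpoly (\<lambda>z. f z * g z)"

definition zariski_closure :: "pt set \<Rightarrow> pt set" where
  "zariski_closure S = {z. \<forall>f. cpoly f \<and> (\<forall>s\<in>S. f s = 0) \<longrightarrow> f z = 0}"

text \<open>Affine cone over the image of SE(3).\<close>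
definition iso_cone :: "pt set" where
  "iso_cone = {pscale c (iso_point A t) | c A t. A \<in> SO3}"

text \<open>X, as the set of nonzero representatives of its projective points.\<close>
definition Xvar :: "pt set" where
  "Xvar = {z \<in> zariski_closure iso_cone. z \<noteq> pt_zero}"

definition lform :: "real^3 \<Rightarrow> real^3 \<Rightarrow> real \<Rightarrow> pt \<Rightarrow> complex" where
  "lform p P d z = (case z of (h, M, x, y, r) \<Rightarrow>
      - (complex_of_real (d^2)) * h
      + (cdot (cvec p) (cvec p) + cdot (cvec P) (cvec P)) * h + r
      - 2 * cdot (cvec p) x - 2 * cdot y (cvec P) - 2 * cdot (M *v cvec p) (cvec P))"

definition KPi :: "nat \<Rightarrow> (nat \<Rightarrow> real^3) \<Rightarrow> (nat \<Rightarrow> real^3) \<Rightarrow> (nat \<Rightarrow> real) \<Rightarrow> pt set" where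
  "KPi n p P d = {z \<in> Xvar. \<forall>i<n. lform (p i) (P i) (d i) z = 0}"

definition Bset :: "pt set" where
  "Bset = {z \<in> Xvar. fst z = 0}"

definition bonds :: "nat \<Rightarrow> (nat \<Rightarrow> real^3) \<Rightarrow> (nat \<Rightarrow> real^3) \<Rightarrow> (nat \<Rightarrow> real) \<Rightarrow> pt set" where
  "bonds n p P d = KPi n p P d \<inter> Bset"

definition butterfly_point :: "pt \<Rightarrow> bool" where
  "butterfly_point z \<longleftrightarrow> z \<in> Bset \<and> (case z of (h, M, x, y, r) \<Rightarrow>
      M \<noteq> 0 \<and> (\<chi> i j. r * M$i$j + 2 * y$i * x$j) = (0 :: complex^3^3))"

definition butterfly_bond :: "nat \<Rightarrow> (nat \<Rightarrow> real^3) \<Rightarrow> (nat \<Rightarrow> real^3) \<Rightarrow> (nat \<Rightarrow> real) \<Rightarrow> pt \<Rightarrow> bool" where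
  "butterfly_bond n p P d z \<longleftrightarrow> z \<in> bonds n p P d \<and> butterfly_point z"

definition isotropic :: "complex^3 \<Rightarrow> bool" where
  "isotropic u \<longleftrightarrow> u \<noteq> 0 \<and> cdot u u = 0"

definition toP1 :: "complex^3 \<Rightarrow> complex \<times> complex" where
  "toP1 u = (if (\<i> * u$1 + u$2, u$3) \<noteq> (0, 0)
             then (u$1 - \<i> * u$2, u$3)
             else (u$3, - u$1 - \<i> * u$2))"

text \<open>Inverse stereographic projection P^1 -> S^2.\<close>
definition stereo :: "complex \<times> complex \<Rightarrow> real^3" where
  "stereo z = (if fst z = 0 then vector [0, 0, 1]
     else (let q = snd z / fst z; a = Re q; b = Im q in
           (1 / (a^2 + b^2 + 1)) *\<^sub>R vector [2 * a, 2 * b, a^2 + b^2 - 1]))"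

definition Smap :: "complex^3 \<Rightarrow> real^3" where
  "Smap u = stereo (toP1 u)"

definition Mof :: "pt \<Rightarrow> complex^3^3" where
  "Mof z = fst (snd z)"

definition on_line_parallel :: "(nat \<Rightarrow> real^3) \<Rightarrow> nat set \<Rightarrow> real^3 \<Rightarrow> bool" where
  "on_line_parallel q I L \<longleftrightarrow> (\<exists>a. \<forall>i\<in>I. \<exists>t::real. q i = a + t *\<^sub>R L)"

end

theory Submission
  imports Defs "HOL-Computational_Algebra.Polynomial" "HOL-Combinatorics.Permutations"
begin


lemma cpoly_fst: "cpoly (\<lambda>z. fst z)"
proof -
  have "(\<lambda>(h::complex, M::complex^3^3, x::complex^3, y::complex^3, r::complex). h) = (\<lambda>z. fst z)" by auto
  with cp_h show ?thesis by metis
qed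
lemma cpoly_M: "cpoly (\<lambda>z. fst (snd z) $ i $ j)"
proof -
  have "(\<lambda>(h::complex, M::complex^3^3, x::complex^3, y::complex^3, r::complex). M$i$j) = (\<lambda>z. fst (snd z) $ i $ j)" by auto
  with cp_M show ?thesis by metis
qed
lemma cpoly_x: "cpoly (\<lambda>z. fst (snd (snd z)) $ i)"
proof -
  have "(\<lambda>(h::complex, M::complex^3^3, x::complex^3, y::complex^3, r::complex). x$i) = (\<lambda>z. fst (snd (snd z)) $ i)" by auto
  with cp_x show ?thesis by metis
qed
lemma cpoly_y: "cpoly (\<lambda>z. fst (snd (snd (snd z))) $ i)"
proof -
  have "(\<lambda>(h::complex, M::complex^3^3, x::complex^3, y::complex^3, r::complex). y$i) = (\<lambda>z. fst (snd (snd (snd z))) $ i)" by auto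
  with cp_y show ?thesis by metis
qed
lemma cpoly_r: "cpoly (\<lambda>z. snd (snd (snd (snd z))))"
proof -
  have "(\<lambda>(h::complex, M::complex^3^3, x::complex^3, y::complex^3, r::complex). r) = (\<lambda>z. snd (snd (snd (snd z))))" by auto
  with cp_r show ?thesis by metis
qed
lemma cpoly_diff: "cpoly f \<Longrightarrow> cpoly g \<Longrightarrow> cpoly (\<lambda>z. f z - g z)"
proof -
  assume "cpoly f" "cpoly g"
  hence "cpoly (\<lambda>z. f z + (\<lambda>_. -1) z * g z)" by (intro cp_add cp_mult cp_const)
  thus ?thesis by simp
qed
lemma cpoly_sum: "finite A \<Longrightarrow> (\<And>a. a \<in> A \<Longrightarrow> cpoly (f a)) \<Longrightarrow> cpoly (\<lambda>z. \<Sum>a\<in>A. f a z)"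
proof (induction A rule: finite_induct)
  case empty then show ?case using cp_const[of 0] by simp
next
  case (insert a A) then show ?case by (simp add: cp_add)
qed

lemma Xvar_poly: "z \<in> Xvar \<Longrightarrow> cpoly f \<Longrightarrow> (\<And>c A t. A \<in> SO3 \<Longrightarrow> f (pscale c (iso_point A t)) = 0) \<Longrightarrow> f z = 0"
  unfolding Xvar_def zariski_closure_def iso_cone_def by blast

lemma SO3_orth: "A \<in> SO3 \<Longrightarrow> transpose A ** A = mat 1 \<and> A ** transpose A = mat 1"
  by (simp add: SO3_def orthogonal_matrix_def)

lemma cvec_sum: "(\<Sum>i\<in>UNIV. complex_of_real (f i)) = complex_of_real (sum f UNIV)" by simp

definition hX where "hX z = fst (z::pt)"
definition MX where "MX z = fst (snd (z::pt))"
definition xX where "xX z = fst (snd (snd (z::pt)))"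
definition yX where "yX z = fst (snd (snd (snd (z::pt))))"
definition rX where "rX z = snd (snd (snd (snd (z::pt))))"

lemma pscale_iso: "hX (pscale c (iso_point A t)) = c"
  "MX (pscale c (iso_point A t)) = (\<chi> i j. c * of_real (A$i$j))"
  "xX (pscale c (iso_point A t)) = (\<chi> i. c * of_real (- (transpose A *v t) $ i))"
  "yX (pscale c (iso_point A t)) = (\<chi> i. c * of_real (t $ i))"
  "rX (pscale c (iso_point A t)) = c * of_real (t \<bullet> t)"
  by (simp_all add: hX_def MX_def xX_def yX_def rX_def pscale_def iso_point_def cmat_def cvec_def)

lemma E1: assumes "z \<in> Xvar" shows "hX z * xX z $ j + (\<Sum>i\<in>UNIV. MX z $ i $ j * yX z $ i) = 0"
proof -
  have "(\<lambda>z. hX z * xX z $ j + (\<Sum>i\<in>UNIV. MX z $ i $ j * yX z $ i)) z = 0"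
  proof (rule Xvar_poly[OF assms])
    show "cpoly (\<lambda>z. hX z * xX z $ j + (\<Sum>i\<in>UNIV. MX z $ i $ j * yX z $ i))"
      unfolding hX_def MX_def xX_def yX_def
      by (intro cp_add cp_mult cpoly_sum cpoly_fst cpoly_M cpoly_x cpoly_y) auto
  next
    fix c A t assume "A \<in> SO3"
    show "(\<lambda>z. hX z * xX z $ j + (\<Sum>i\<in>UNIV. MX z $ i $ j * yX z $ i)) (pscale c (iso_point A t)) = 0"
    proof -
      have r: "(- (transpose A *v t)) $ j + (\<Sum>i\<in>UNIV. A $ i $ j * t $ i) = 0"
        by (simp add: matrix_vector_mult_def transpose_def)
      have "(\<lambda>z. hX z * xX z $ j + (\<Sum>i\<in>UNIV. MX z $ i $ j * yX z $ i)) (pscale c (iso_point A t))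
         = c * c * of_real ((- (transpose A *v t)) $ j + (\<Sum>i\<in>UNIV. A $ i $ j * t $ i))"
        by (simp only: pscale_iso vec_lambda_beta of_real_add of_real_sum of_real_mult distrib_left sum_distrib_left) (simp add: ac_simps)
      with r show ?thesis by simp
    qed
  qed
  thus ?thesis by simp
qed

lemma orth_AAt: "A \<in> SO3 \<Longrightarrow> A *v (transpose A *v t) = t"
  using SO3_orth[of A] by (simp only: matrix_vector_mul_assoc) simp
lemma orth_norm: "A \<in> SO3 \<Longrightarrow> (transpose A *v t) \<bullet> (transpose A *v t) = t \<bullet> t"
proof -
  assume a: "A \<in> SO3"
  have "(transpose A *v t) \<bullet> (transpose A *v t) = t \<bullet> (A *v (transpose A *v t))"
    by (simp only: transpose_matrix_vector dot_lmul_matrix)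
  thus ?thesis using orth_AAt[OF a] by simp
qed

lemma E2: assumes "z \<in> Xvar" shows "hX z * yX z $ i + (\<Sum>j\<in>UNIV. MX z $ i $ j * xX z $ j) = 0"
proof -
  have "(\<lambda>z. hX z * yX z $ i + (\<Sum>j\<in>UNIV. MX z $ i $ j * xX z $ j)) z = 0"
  proof (rule Xvar_poly[OF assms])
    show "cpoly (\<lambda>z. hX z * yX z $ i + (\<Sum>j\<in>UNIV. MX z $ i $ j * xX z $ j))"
      unfolding hX_def MX_def xX_def yX_def
      by (intro cp_add cp_mult cpoly_sum cpoly_fst cpoly_M cpoly_x cpoly_y) auto
  next
    fix c A t assume a: "A \<in> SO3"
    show "(\<lambda>z. hX z * yX z $ i + (\<Sum>j\<in>UNIV. MX z $ i $ j * xX z $ j)) (pscale c (iso_point A t)) = 0"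
    proof -
      have r: "t $ i + (\<Sum>j\<in>UNIV. A $ i $ j * (- (transpose A *v t)) $ j) = 0"
      proof -
        have "(\<Sum>j\<in>UNIV. A $ i $ j * (- (transpose A *v t)) $ j) = - (A *v (transpose A *v t)) $ i"
          by (simp only: matrix_vector_mult_def vec_lambda_beta vector_uminus_component sum_negf[symmetric] mult_minus_right) (simp add: sum_negf)
        thus ?thesis using orth_AAt[OF a] by simp
      qed
      have "(\<lambda>z. hX z * yX z $ i + (\<Sum>j\<in>UNIV. MX z $ i $ j * xX z $ j)) (pscale c (iso_point A t))
         = c * c * of_real (t $ i + (\<Sum>j\<in>UNIV. A $ i $ j * (- (transpose A *v t)) $ j))"
        by (simp only: pscale_iso vec_lambda_beta of_real_add of_real_sum of_real_mult distrib_left sum_distrib_left) (simp add: ac_simps)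
      with r show ?thesis by simp
    qed
  qed
  thus ?thesis by simp
qed

lemma E3: assumes "z \<in> Xvar" shows "hX z * rX z - (\<Sum>i\<in>UNIV. yX z $ i * yX z $ i) = 0"
proof -
  have "(\<lambda>z. hX z * rX z - (\<Sum>i\<in>UNIV. yX z $ i * yX z $ i)) z = 0"
  proof (rule Xvar_poly[OF assms])
    show "cpoly (\<lambda>z. hX z * rX z - (\<Sum>i\<in>UNIV. yX z $ i * yX z $ i))"
      unfolding hX_def rX_def yX_def
      by (intro cpoly_diff cp_mult cpoly_sum cpoly_fst cpoly_r cpoly_y) auto
  next
    fix c A t assume a: "A \<in> SO3"
    show "(\<lambda>z. hX z * rX z - (\<Sum>i\<in>UNIV. yX z $ i * yX z $ i)) (pscale c (iso_point A t)) = 0"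
    proof -
      have r: "t \<bullet> t - (\<Sum>i\<in>UNIV. t $ i * t $ i) = 0" by (simp add: inner_vec_def)
      have "(\<lambda>z. hX z * rX z - (\<Sum>i\<in>UNIV. yX z $ i * yX z $ i)) (pscale c (iso_point A t))
         = c * c * of_real (t \<bullet> t - (\<Sum>i\<in>UNIV. t $ i * t $ i))"
        by (simp only: pscale_iso vec_lambda_beta of_real_diff of_real_sum of_real_mult right_diff_distrib sum_distrib_left) (simp add: ac_simps)
      with r show ?thesis by simp
    qed
  qed
  thus ?thesis by simp
qed

lemma E4: assumes "z \<in> Xvar" shows "hX z * rX z - (\<Sum>i\<in>UNIV. xX z $ i * xX z $ i) = 0"
proof -
  have "(\<lambda>z. hX z * rX z - (\<Sum>i\<in>UNIV. xX z $ i * xX z $ i)) z = 0"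
  proof (rule Xvar_poly[OF assms])
    show "cpoly (\<lambda>z. hX z * rX z - (\<Sum>i\<in>UNIV. xX z $ i * xX z $ i))"
      unfolding hX_def rX_def xX_def
      by (intro cpoly_diff cp_mult cpoly_sum cpoly_fst cpoly_r cpoly_x) auto
  next
    fix c A t assume a: "A \<in> SO3"
    show "(\<lambda>z. hX z * rX z - (\<Sum>i\<in>UNIV. xX z $ i * xX z $ i)) (pscale c (iso_point A t)) = 0"
    proof -
      have r: "t \<bullet> t - (\<Sum>i\<in>UNIV. (- (transpose A *v t)) $ i * (- (transpose A *v t)) $ i) = 0"
        using orth_norm[OF a, of t] by (simp add: inner_vec_def)
      have "(\<lambda>z. hX z * rX z - (\<Sum>i\<in>UNIV. xX z $ i * xX z $ i)) (pscale c (iso_point A t))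
         = c * c * of_real (t \<bullet> t - (\<Sum>i\<in>UNIV. (- (transpose A *v t)) $ i * (- (transpose A *v t)) $ i))"
        by (simp only: pscale_iso vec_lambda_beta of_real_diff of_real_sum of_real_mult right_diff_distrib sum_distrib_left) (simp add: ac_simps)
      with r show ?thesis by simp
    qed
  qed
  thus ?thesis by simp
qed



lemma cdot3: "cdot u v = u$1* v$1 + u$2* v$2 + u$3* v$3" by (simp add: cdot_def sum_3)

lemma vec3_eq: "(x::'a^3) = y \<longleftrightarrow> x$1 = y$1 \<and> x$2 = y$2 \<and> x$3 = y$3"
  by (simp add: vec_eq_iff forall_3)

lemma vec3_ne0: "(x::'a::zero^3) \<noteq> 0 \<Longrightarrow> \<exists>k. x$k \<noteq> 0"
  by (metis vec_eq_iff zero_index)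

lemma iso_minors:
  fixes w z :: "complex^3"
  assumes "cdot w w = 0" "cdot z z = 0" "cdot w z = 0"
  shows "z$i * w$j = z$j * w$i"
proof -
  have a: "w$1*w$1+w$2*w$2+w$3*w$3 = 0" "z$1*z$1+z$2*z$2+z$3*z$3 = 0" "w$1*z$1+w$2*z$2+w$3*z$3 = 0"
    using assms by (simp_all add: cdot3)
  have m12: "z$1 * w$2 - z$2 * w$1 = 0" using a by algebra
  have m13: "z$1 * w$3 - z$3 * w$1 = 0" using a by algebra
  have m23: "z$2 * w$3 - z$3 * w$2 = 0" using a by algebra
  show ?thesis using m12 m13 m23 exhaust_3[of i] exhaust_3[of j]
    by (auto simp: algebra_simps)
qed

lemma iso_par:
  fixes w z :: "complex^3"
  assumes "isotropic w" "cdot z z = 0" "cdot w z = 0"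
  shows "\<exists>mu. z = mu *s w"
proof -
  from assms(1) have w0: "w \<noteq> 0" and ww: "cdot w w = 0" by (auto simp: isotropic_def)
  obtain k where k: "w$k \<noteq> 0" using vec3_ne0[OF w0] by blast
  have "z = (z$k / w$k) *s w"
  proof (subst vec_eq_iff, intro allI)
    fix i show "z$i = ((z$k / w$k) *s w)$i"
      using iso_minors[OF ww assms(2,3), of i k] k by (simp add: field_simps)
  qed
  thus ?thesis by blast
qed

lemma cdot_comm: "cdot u v = cdot v u" by (simp add: cdot_def mult.commute)

lemma butterfly_decomp:
  assumes X: "z \<in> Xvar" and h: "hX z = 0" and M: "MX z = outer v w"
    and iv: "isotropic v" and iw: "isotropic w"
    and bf: "(\<chi> i j. rX z * MX z$i$j + 2 * yX z$i * xX z$j) = (0::complex^3^3)"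
  shows "\<exists>lm mu. xX z = mu *s w \<and> yX z = lm *s v \<and> rX z = -2*lm*mu"
proof -
  let ?x = "xX z" and ?y = "yX z" and ?r = "rX z"
  from iv have v0: "v \<noteq> 0" by (simp add: isotropic_def)
  from iw have w0: "w \<noteq> 0" by (simp add: isotropic_def)
  obtain a where a: "v$a \<noteq> 0" using vec3_ne0[OF v0] by blast
  obtain b where b: "w$b \<noteq> 0" using vec3_ne0[OF w0] by blast
  have bfij: "?r * (v$i * w$j) + 2 * ?y$i * ?x$j = 0" for i j
  proof -
    have "(\<chi> i j. rX z * MX z$i$j + 2 * yX z$i * xX z$j) $ i $ j = (0::complex^3^3) $ i $ j" using bf by simp
    thus ?thesis using M by (simp add: outer_def)
  qed
  have yy: "cdot ?y ?y = 0" using E3[OF X] h by (simp add: cdot_def)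
  have xx: "cdot ?x ?x = 0" using E4[OF X] h by (simp add: cdot_def)
  have vy: "cdot v ?y = 0"
  proof -
    have "(\<Sum>i\<in>UNIV. MX z $ i $ b * yX z $ i) = 0" using E1[OF X, of b] h by simp
    hence "w$b * cdot v ?y = 0" using M by (simp add: outer_def cdot_def sum_distrib_left ac_simps)
    thus ?thesis using b by simp
  qed
  have wx: "cdot w ?x = 0"
  proof -
    have "(\<Sum>j\<in>UNIV. MX z $ a $ j * xX z $ j) = 0" using E2[OF X, of a] h by simp
    hence "v$a * cdot w ?x = 0" using M by (simp add: outer_def cdot_def sum_distrib_left ac_simps)
    thus ?thesis using a by simp
  qed
  show ?thesis
  proof (cases "?r = 0")
    case r0: True
    hence yx: "?y$i * ?x$j = 0" for i j using bfij[of i j] by simp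
    show ?thesis
    proof (cases "?y = 0")
      case True
      obtain mu where "?x = mu *s w" using iso_par[OF iw xx wx] by blast
      hence "?x = mu *s w \<and> ?y = 0 *s v \<and> ?r = -2*0*mu" using True r0 by (simp add: vec_eq_iff)
      thus ?thesis by blast
    next
      case False
      then obtain k where k: "?y$k \<noteq> 0" using vec3_ne0 by blast
      have "?x = 0" using yx[of k] k by (simp add: vec_eq_iff)
      obtain lm where "?y = lm *s v" using iso_par[OF iv yy vy] by blast
      hence "?x = 0 *s w \<and> ?y = lm *s v \<and> ?r = -2*lm*0" using \<open>?x = 0\<close> r0 by (simp add: vec_eq_iff)
      thus ?thesis by blast
    qed
  next
    case False
    have xb: "?x$b \<noteq> 0" using bfij[of a b] False a b by auto
    have ya: "?y$a \<noteq> 0" using bfij[of a b] False a b by auto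
    define lm where "lm = - ?r * w$b / (2 * ?x$b)"
    define mu where "mu = - ?r * v$a / (2 * ?y$a)"
    have Y: "?y = lm *s v"
    proof (subst vec_eq_iff, intro allI)
      fix i
      have e: "2 * ?y$i * ?x$b = - (?r * (v$i * w$b))" using bfij[of i b] by (simp add: eq_neg_iff_add_eq_0 add.commute)
      have "?y$i = (2 * ?y$i * ?x$b) / (2 * ?x$b)" using xb by simp
      also have "\<dots> = lm * v$i" unfolding e lm_def using xb by (simp add: field_simps)
      finally show "?y$i = (lm *s v)$i" by simp
    qed
    have Xe: "?x = mu *s w"
    proof (subst vec_eq_iff, intro allI)
      fix j
      have e: "2 * ?y$a * ?x$j = - (?r * (v$a * w$j))" using bfij[of a j] by (simp add: eq_neg_iff_add_eq_0 add.commute)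
      have "?x$j = (2 * ?y$a * ?x$j) / (2 * ?y$a)" using ya by simp
      also have "\<dots> = mu * w$j" unfolding e mu_def using ya by (simp add: field_simps)
      finally show "?x$j = (mu *s w)$j" by simp
    qed
    have "?r * (v$a * w$b) + 2 * (lm * v$a) * (mu * w$b) = 0" using bfij[of a b] Y Xe by simp
    hence "(v$a * w$b) * (?r + 2 * lm * mu) = 0" by (simp add: algebra_simps)
    hence "?r = -2*lm*mu" using a b by (simp add: eq_neg_iff_add_eq_0)
    thus ?thesis using Y Xe by blast
  qed
qed



lemma stereo_norm: "norm (stereo z) = 1"
proof (cases "fst z = 0")
  case True thus ?thesis by (simp add: stereo_def norm_eq_sqrt_inner inner_vec_def sum_3)
next
  case False
  define q where "q = snd z / fst z"
  define a where "a = Re q" define b where "b = Im q"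
  have s: "stereo z = (1 / (a^2 + b^2 + 1)) *\<^sub>R vector [2 * a, 2 * b, a^2 + b^2 - 1]"
    using False by (simp add: stereo_def q_def a_def b_def Let_def)
  have pos: "a^2 + b^2 + 1 > 0" using zero_le_power2[of a] zero_le_power2[of b] by linarith
  define V :: "real^3" where "V = vector [2 * a, 2 * b, a^2 + b^2 - 1]"
  have VV: "V \<bullet> V = (a^2+b^2+1)^2"
  proof -
    have "V \<bullet> V = (2*a)*(2*a) + (2*b)*(2*b) + (a^2 + b^2 - 1)*(a^2 + b^2 - 1)"
      by (simp only: V_def inner_vec_def sum_3 vector_3 inner_real_def)
    also have "\<dots> = (a^2+b^2+1)^2" by (simp add: power2_eq_square algebra_simps)
    finally show ?thesis .
  qed
  have "(stereo z) \<bullet> (stereo z) = (1 / (a^2 + b^2 + 1)) * (1 / (a^2 + b^2 + 1)) * (V \<bullet> V)"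
    unfolding s V_def[symmetric] by simp
  also have "\<dots> = 1" using pos unfolding VV by (simp add: power2_eq_square)
  finally show ?thesis by (simp add: norm_eq_sqrt_inner)
qed

lemma cvec_scaleR: "cvec (c *\<^sub>R V) = complex_of_real c *s cvec V"
  by (simp add: cvec_def vec_eq_iff)
lemma cdot_smult_right: "cdot u (c *s V) = c * cdot u V"
  by (simp add: cdot_def sum_distrib_left ac_simps)
lemma cdot_smult_left: "cdot (c *s u) V = c * cdot u V"
  by (simp add: cdot_def sum_distrib_left ac_simps)
lemma cdot_cvec_vector: "cdot w (cvec (vector [x1,x2,x3])) = w$1 * of_real x1 + w$2 * of_real x2 + w$3 * of_real x3"
  by (simp add: cdot3 cvec_def)

lemma Smap_norm: "norm (Smap w) = 1" by (simp add: Smap_def stereo_norm)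

lemma Smap_perp:
  assumes "isotropic w" shows "cdot w (cvec (Smap w)) = 0"
proof -
  let ?al = "w$1" and ?be = "w$2" and ?ga = "w$3"
  have iso: "?al*?al + ?be*?be + ?ga*?ga = 0" using assms by (simp add: isotropic_def cdot3)
  have north: "cdot w (cvec (vector [0,0,1])) = ?ga" by (simp add: cdot3 cvec_def)
  show ?thesis
  proof (cases "(\<i> * ?al + ?be, ?ga) \<noteq> (0, 0)")
    case False
    hence "?ga = 0" "fst (toP1 w) = 0" by (auto simp: toP1_def)
    thus ?thesis using north by (simp add: Smap_def stereo_def)
  next
    case br: True
    hence tp: "toP1 w = (?al - \<i> * ?be, ?ga)" by (simp add: toP1_def)
    define D where "D = ?al - \<i> * ?be"
    show ?thesis
    proof (cases "D = 0")
      case True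
      have ii: "\<i> * \<i> = -1" by simp
      have "?ga * ?ga = 0" using iso True ii unfolding D_def by algebra
      thus ?thesis using north tp True by (simp add: Smap_def stereo_def D_def)
    next
      case False
      define q where "q = ?ga / D"
      define a where "a = Re q" define b where "b = Im q"
      have s: "Smap w = (1 / (a^2 + b^2 + 1)) *\<^sub>R vector [2 * a, 2 * b, a^2 + b^2 - 1]"
        using False tp by (simp add: Smap_def stereo_def q_def a_def b_def Let_def D_def)
      have qD: "q * D = ?ga" using False by (simp add: q_def)
      have e1: "complex_of_real (2*a) = q + cnj q" by (simp add: a_def complex_add_cnj)
      have e2: "complex_of_real (2*b) = - \<i> * (q - cnj q)" by (simp add: b_def complex_diff_cnj)
      have e3: "complex_of_real (a^2+b^2) = q * cnj q" by (simp add: a_def b_def complex_mult_cnj)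
      have key: "?al * (q + cnj q) + ?be * (- \<i> * (q - cnj q)) + ?ga * (q * cnj q - 1) = 0"
      proof -
        have ii: "\<i> * \<i> = -1" by simp
        show ?thesis using iso qD False ii unfolding D_def by algebra
      qed
      have "cdot w (cvec (Smap w)) = complex_of_real (1 / (a^2 + b^2 + 1)) *
          (?al * complex_of_real (2*a) + ?be * complex_of_real (2*b) + ?ga * (complex_of_real (a^2+b^2) - 1))"
        unfolding s cvec_scaleR cdot_smult_right cdot_cvec_vector by simp
      also have "\<dots> = 0" unfolding e1 e2 e3 key by simp
      finally show ?thesis .
    qed
  qed
qed



lemma cross_par:
  fixes a1 a2 a3 b1 b2 b3 x1 x2 x3 :: real
  assumes "a1*x1+a2*x2+a3*x3 = 0" "b1*x1+b2*x2+b3*x3 = 0"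
  defines "c1 \<equiv> a2*b3 - a3*b2" and "c2 \<equiv> a3*b1 - a1*b3" and "c3 \<equiv> a1*b2 - a2*b1"
  shows "(c1*c1+c2*c2+c3*c3) * x1 = (c1*x1+c2*x2+c3*x3) * c1"
    "(c1*c1+c2*c2+c3*c3) * x2 = (c1*x1+c2*x2+c3*x3) * c2"
    "(c1*c1+c2*c2+c3*c3) * x3 = (c1*x1+c2*x2+c3*x3) * c3"
  using assms by algebra+

lemma re_cdot: "Re (cdot w (cvec p)) = Re (w$1) * p$1 + Re (w$2) * p$2 + Re (w$3) * p$3"
  by (simp add: cdot3 cvec_def)
lemma im_cdot: "Im (cdot w (cvec p)) = Im (w$1) * p$1 + Im (w$2) * p$2 + Im (w$3) * p$3"
  by (simp add: cdot3 cvec_def)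

lemma perp_par:
  assumes iw: "isotropic w" and pp: "cdot w (cvec p) = 0"
  shows "\<exists>t. p = t *\<^sub>R Smap w"
proof -
  define L where "L = Smap w"
  have pL: "cdot w (cvec L) = 0" using Smap_perp[OF iw] by (simp add: L_def)
  have nL: "L \<noteq> 0" using Smap_norm[of w] by (auto simp: L_def)
  define a1 where "a1 = Re (w$1)" define a2 where "a2 = Re (w$2)" define a3 where "a3 = Re (w$3)"
  define b1 where "b1 = Im (w$1)" define b2 where "b2 = Im (w$2)" define b3 where "b3 = Im (w$3)"
  define c1 where "c1 = a2*b3 - a3*b2" define c2 where "c2 = a3*b1 - a1*b3" define c3 where "c3 = a1*b2 - a2*b1"
  define cc where "cc = c1*c1+c2*c2+c3*c3"
  have pa: "a1*p$1+a2*p$2+a3*p$3 = 0" using arg_cong[OF pp, of Re] by (simp add: re_cdot a1_def a2_def a3_def)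
  have pb: "b1*p$1+b2*p$2+b3*p$3 = 0" using arg_cong[OF pp, of Im] by (simp add: im_cdot b1_def b2_def b3_def)
  have La: "a1*L$1+a2*L$2+a3*L$3 = 0" using arg_cong[OF pL, of Re] by (simp add: re_cdot a1_def a2_def a3_def)
  have Lb: "b1*L$1+b2*L$2+b3*L$3 = 0" using arg_cong[OF pL, of Im] by (simp add: im_cdot b1_def b2_def b3_def)
  have ww: "w$1*w$1+w$2*w$2+w$3*w$3 = 0" using iw by (simp add: isotropic_def cdot3)
  have re: "a1*a1+a2*a2+a3*a3 = b1*b1+b2*b2+b3*b3"
    using arg_cong[OF ww, of Re] by (simp add: a1_def a2_def a3_def b1_def b2_def b3_def)
  have im: "a1*b1+a2*b2+a3*b3 = 0"
    using arg_cong[OF ww, of Im] by (simp add: a1_def a2_def a3_def b1_def b2_def b3_def algebra_simps)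
  have lag: "cc = (a1*a1+a2*a2+a3*a3)*(b1*b1+b2*b2+b3*b3) - (a1*b1+a2*b2+a3*b3)^2"
    unfolding cc_def c1_def c2_def c3_def by (simp add: power2_eq_square algebra_simps)
  have "a1*a1+a2*a2+a3*a3 \<noteq> 0"
  proof
    assume h: "a1*a1+a2*a2+a3*a3 = 0"
    hence "a1 = 0 \<and> a2 = 0 \<and> a3 = 0" by (smt (verit) zero_le_square[of a1] zero_le_square[of a2] zero_le_square[of a3] zero_le_square[of b1] zero_le_square[of b2] zero_le_square[of b3] mult_eq_0_iff)
    moreover have "b1 = 0 \<and> b2 = 0 \<and> b3 = 0" using h re by (smt (verit) zero_le_square[of a1] zero_le_square[of a2] zero_le_square[of a3] zero_le_square[of b1] zero_le_square[of b2] zero_le_square[of b3] mult_eq_0_iff)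
    ultimately have "w = 0" unfolding vec3_eq a1_def a2_def a3_def b1_def b2_def b3_def
      by (simp add: complex_eq_iff)
    thus False using iw by (simp add: isotropic_def)
  qed
  hence cc0: "cc \<noteq> 0" using lag re im by simp
  note P = cross_par[OF pa pb, folded c1_def c2_def c3_def cc_def]
  note Q = cross_par[OF La Lb, folded c1_def c2_def c3_def cc_def]
  define kp where "kp = c1*p$1+c2*p$2+c3*p$3"
  define kL where "kL = c1*L$1+c2*L$2+c3*L$3"
  have kL0: "kL \<noteq> 0"
  proof
    assume k: "kL = 0"
    have "cc * L$1 = 0" "cc * L$2 = 0" "cc * L$3 = 0" using Q k unfolding kL_def cc_def by simp_all
    hence "L$1 = 0" "L$2 = 0" "L$3 = 0" using cc0 by simp_all
    thus False using nL by (simp add: vec3_eq)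
  qed
  have "p = (kp / kL) *\<^sub>R L"
    unfolding vec3_eq
  proof (intro conjI)
    show "p$1 = ((kp / kL) *\<^sub>R L)$1"
    proof -
      have P1: "cc * p$1 = kp * c1" using P(1) unfolding cc_def kp_def .
      have Q1: "cc * L$1 = kL * c1" using Q(1) unfolding cc_def kL_def .
      have "cc * (kL * p$1) = kL * (cc * p$1)" by (simp only: mult_ac)
      also have "\<dots> = kp * (kL * c1)" unfolding P1 by (simp only: mult_ac)
      also have "\<dots> = cc * (kp * L$1)" unfolding Q1[symmetric] by (simp only: mult_ac)
      finally have "cc * (kL * p$1) = cc * (kp * L$1)" .
      thus ?thesis using cc0 kL0 by (simp add: field_simps)
    qed
    show "p$2 = ((kp / kL) *\<^sub>R L)$2"
    proof -
      have P1: "cc * p$2 = kp * c2" using P(2) unfolding cc_def kp_def .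
      have Q1: "cc * L$2 = kL * c2" using Q(2) unfolding cc_def kL_def .
      have "cc * (kL * p$2) = kL * (cc * p$2)" by (simp only: mult_ac)
      also have "\<dots> = kp * (kL * c2)" unfolding P1 by (simp only: mult_ac)
      also have "\<dots> = cc * (kp * L$2)" unfolding Q1[symmetric] by (simp only: mult_ac)
      finally have "cc * (kL * p$2) = cc * (kp * L$2)" .
      thus ?thesis using cc0 kL0 by (simp add: field_simps)
    qed
    show "p$3 = ((kp / kL) *\<^sub>R L)$3"
    proof -
      have P1: "cc * p$3 = kp * c3" using P(3) unfolding cc_def kp_def .
      have Q1: "cc * L$3 = kL * c3" using Q(3) unfolding cc_def kL_def .
      have "cc * (kL * p$3) = kL * (cc * p$3)" by (simp only: mult_ac)
      also have "\<dots> = kp * (kL * c3)" unfolding P1 by (simp only: mult_ac)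
      also have "\<dots> = cc * (kp * L$3)" unfolding Q1[symmetric] by (simp only: mult_ac)
      finally have "cc * (kL * p$3) = cc * (kp * L$3)" .
      thus ?thesis using cc0 kL0 by (simp add: field_simps)
    qed
  qed
  thus ?thesis unfolding L_def by blast
qed



lemma cvec_add: "cvec (a + b) = cvec a + cvec b" by (simp add: cvec_def vec_eq_iff)
lemma cvec_diff: "cvec (a - b) = cvec a - cvec b" by (simp add: cvec_def vec_eq_iff)
lemma cdot_add_right: "cdot u (a + b) = cdot u a + cdot u b" by (simp add: cdot_def sum.distrib algebra_simps)
lemma cdot_diff_right: "cdot u (a - b) = cdot u a - cdot u b" by (simp add: cdot_def sum_subtractf algebra_simps)

lemma const_line:
  assumes iw: "isotropic w" and c: "\<forall>i\<in>S. cdot w (cvec (q i)) = c"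
  shows "on_line_parallel q S (Smap w)"
proof (cases "S = {}")
  case True thus ?thesis by (simp add: on_line_parallel_def)
next
  case False
  then obtain i0 where i0: "i0 \<in> S" by blast
  have "\<forall>i\<in>S. \<exists>t. q i = q i0 + t *\<^sub>R Smap w"
  proof
    fix i assume "i \<in> S"
    hence "cdot w (cvec (q i - q i0)) = 0" using c i0 by (simp add: cvec_diff cdot_diff_right)
    then obtain t where "q i - q i0 = t *\<^sub>R Smap w" using perp_par[OF iw] by blast
    thus "\<exists>t. q i = q i0 + t *\<^sub>R Smap w" by (metis add.commute diff_add_cancel)
  qed
  thus ?thesis unfolding on_line_parallel_def by blast
qed

lemma line_const:
  assumes iw: "isotropic w" and l: "on_line_parallel q S (Smap w)"
  shows "\<forall>i\<in>S. cdot w (cvec (q i)) = cdot w (cvec (SOME a. \<forall>i\<in>S. \<exists>t::real. q i = a + t *\<^sub>R Smap w))"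
proof
  let ?a = "SOME a. \<forall>i\<in>S. \<exists>t::real. q i = a + t *\<^sub>R Smap w"
  have a: "\<forall>i\<in>S. \<exists>t::real. q i = ?a + t *\<^sub>R Smap w" using l unfolding on_line_parallel_def by (rule someI_ex)
  fix i assume "i \<in> S"
  then obtain t where "q i = ?a + t *\<^sub>R Smap w" using a by blast
  thus "cdot w (cvec (q i)) = cdot w (cvec ?a)"
    using Smap_perp[OF iw] by (simp add: cvec_add cdot_add_right cvec_scaleR cdot_smult_right)
qed

lemma Smap_scale:
  assumes "c \<noteq> 0" shows "Smap (c *s w) = Smap w"
proof -
  have tp: "toP1 (c *s w) = (c * fst (toP1 w), c * snd (toP1 w))"
  proof (cases "(\<i> * w$1 + w$2, w$3) \<noteq> (0, 0)")
    case True
    have e: "\<i> * (c * w$1) + c * w$2 = c * (\<i> * w$1 + w$2)" by (simp add: algebra_simps)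
    have "(\<i> * (c * w$1) + c * w$2, c * w$3) \<noteq> (0, 0)" using assms True unfolding e by auto
    thus ?thesis using True by (simp add: toP1_def algebra_simps)
  next
    case False
    have e: "\<i> * (c * w$1) + c * w$2 = c * (\<i> * w$1 + w$2)" by (simp add: algebra_simps)
    have "\<not> (\<i> * (c * w$1) + c * w$2, c * w$3) \<noteq> (0, 0)" using False unfolding e by auto
    thus ?thesis using False by (simp add: toP1_def algebra_simps)
  qed
  show ?thesis unfolding Smap_def tp stereo_def using assms by simp
qed

lemma Smap_onto:
  assumes nL: "norm L = 1" shows "\<exists>w. isotropic w \<and> Smap w = L"
proof -
  have LL: "L$1*L$1 + L$2*L$2 + L$3*L$3 = 1"
    using nL by (simp add: norm_eq_sqrt_inner inner_vec_def sum_3)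
  show ?thesis
  proof (cases "L$3 = 1")
    case True
    hence "L$1*L$1 + L$2*L$2 = 0" using LL by simp
    hence "L$1 = 0" "L$2 = 0" by (simp_all add: sum_squares_eq_zero_iff)
    hence L: "L = vector [0,0,1]" using True by (simp add: vec3_eq)
    define w :: "complex^3" where "w = vector [\<i>, 1, 0]"
    have "isotropic w" by (simp add: isotropic_def w_def cdot3 vec3_eq)
    moreover have "Smap w = L" by (simp add: Smap_def toP1_def stereo_def w_def L)
    ultimately show ?thesis by blast
  next
    case False
    define d where "d = 1 - L$3"
    have d0: "d \<noteq> 0" using False by (simp add: d_def)
    define a where "a = L$1 / d" define b where "b = L$2 / d"
    define q where "q = Complex a b"
    define w :: "complex^3" where "w = vector [(1 - q*q)/2, \<i> * (1 + q*q)/2, q]"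
    have ii: "\<i> * \<i> = -1" by simp
    have br: "\<i> * w$1 + w$2 = \<i>" by (simp add: w_def field_simps)
    have "cdot w w = 0"
    proof -
      have "cdot w w = ((1 - q*q)/2)*((1 - q*q)/2) + (\<i> * (1 + q*q)/2)*(\<i> * (1 + q*q)/2) + q*q"
        by (simp add: cdot3 w_def)
      also have "\<dots> = 0" by (simp add: field_simps)
      finally show ?thesis .
    qed
    moreover have "w \<noteq> 0" using br by auto
    ultimately have iw: "isotropic w" by (simp add: isotropic_def)
    have tp: "toP1 w = (1, q)"
    proof -
      have "w$1 - \<i> * w$2 = 1" using ii by (simp add: w_def field_simps)
      thus ?thesis using br by (simp add: toP1_def w_def)
    qed
    have s: "a^2 + b^2 + 1 = 2 / d"
    proof -
      have "L$1*L$1 + L$2*L$2 = d * (2 - d)" using LL unfolding d_def by (simp add: algebra_simps)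
      moreover have "a^2+b^2 = (L$1*L$1+L$2*L$2)/(d*d)" by (simp add: a_def b_def power2_eq_square add_divide_distrib)
      ultimately have "a^2+b^2 = (2-d)/d" using d0 by simp
      thus ?thesis using d0 by (simp add: field_simps)
    qed
    have "Smap w = (1 / (a^2 + b^2 + 1)) *\<^sub>R vector [2 * a, 2 * b, a^2 + b^2 - 1]"
      by (simp add: Smap_def tp stereo_def q_def Let_def)
    also have "\<dots> = L"
    proof -
      have s1: "a^2 + b^2 - 1 = 2 / d - 2" using s by simp
      have c1: "(1 / (2/d)) * (2 * a) = L$1" using d0 by (simp add: a_def)
      have c2: "(1 / (2/d)) * (2 * b) = L$2" using d0 by (simp add: b_def)
      have c3: "(1 / (2/d)) * (2/d - 2) = L$3" using d0 by (simp add: d_def field_simps)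
      show ?thesis unfolding s s1 vec3_eq using c1 c2 c3 by simp
    qed
    finally show ?thesis using iw by blast
  qed
qed



lemma perm_split:
  assumes "I \<subseteq> {..<n::nat}"
  shows "\<exists>\<sigma> m. \<sigma> permutes {..<n} \<and> m \<le> n \<and> (\<forall>i<m. \<sigma> i \<in> I) \<and> (\<forall>i. m \<le> i \<and> i < n \<longrightarrow> \<sigma> i \<in> {..<n} - I)"
proof -
  have fI: "finite I" using assms finite_subset by blast
  define xs where "xs = sorted_list_of_set I @ sorted_list_of_set ({..<n} - I)"
  have dxs: "distinct xs" using fI by (simp add: xs_def)
  have sxs: "set xs = {..<n}" using fI assms by (auto simp: xs_def)
  have lxs: "length xs = n" using distinct_card[OF dxs] sxs by simp
  define \<sigma> where "\<sigma> i = (if i < n then xs ! i else i)" for i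
  have bij: "bij_betw \<sigma> {..<n} {..<n}"
  proof -
    have "bij_betw ((!) xs) {..<n} {..<n}" using bij_betw_nth[OF dxs] lxs sxs by simp
    moreover have "\<And>i. i \<in> {..<n} \<Longrightarrow> \<sigma> i = xs ! i" by (simp add: \<sigma>_def)
    ultimately show ?thesis by (metis (mono_tags, lifting) bij_betw_cong)
  qed
  have perm: "\<sigma> permutes {..<n}" by (rule bij_imp_permutes[OF bij]) (simp add: \<sigma>_def)
  define m where "m = card I"
  have lI: "length (sorted_list_of_set I) = m" by (simp add: m_def)
  have mn: "m \<le> n" using card_mono[OF _ assms] m_def by simp
  have A: "\<forall>i<m. \<sigma> i \<in> I"
  proof (intro allI impI)
    fix i assume "i < m"
    hence "\<sigma> i = sorted_list_of_set I ! i" using mn lI by (simp add: \<sigma>_def xs_def nth_append)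
    thus "\<sigma> i \<in> I" using \<open>i < m\<close> lI fI by (metis nth_mem set_sorted_list_of_set)
  qed
  have B: "\<forall>i. m \<le> i \<and> i < n \<longrightarrow> \<sigma> i \<in> {..<n} - I"
  proof (intro allI impI)
    fix i assume h: "m \<le> i \<and> i < n"
    hence "\<sigma> i = sorted_list_of_set ({..<n} - I) ! (i - m)" using lI by (simp add: \<sigma>_def xs_def nth_append)
    moreover have "i - m < length (sorted_list_of_set ({..<n} - I))" using lxs h lI by (simp add: xs_def) arith
    ultimately show "\<sigma> i \<in> {..<n} - I" by (metis finite_Diff finite_lessThan nth_mem set_sorted_list_of_set)
  qed
  show ?thesis using perm mn A B by blast
qed

lemma lform_bf:
  "lform p P d (0, outer v w, mu *s w, lm *s v, r) =
     r - 2 * mu * cdot w (cvec p) - 2 * lm * cdot v (cvec P) - 2 * cdot w (cvec p) * cdot v (cvec P)"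
proof -
  have "outer v w *v cvec p = cdot w (cvec p) *s v"
    by (simp add: outer_def matrix_vector_mult_def cdot_def vec_eq_iff sum_distrib_left ac_simps)
  moreover have "cdot (cvec p) (mu *s w) = mu * cdot w (cvec p)"
    by (simp add: cdot_def sum_distrib_left ac_simps)
  moreover have "cdot (lm *s v) (cvec P) = lm * cdot v (cvec P)"
    by (simp add: cdot_def sum_distrib_left ac_simps)
  moreover have "cdot (cdot w (cvec p) *s v) (cvec P) = cdot w (cvec p) * cdot v (cvec P)"
    by (simp add: cdot_def sum_distrib_left sum_distrib_right ac_simps) (rule sum.swap)
  ultimately show ?thesis unfolding lform_def by (simp add: algebra_simps)
qed

lemma pt_split: "z = (hX z, MX z, xX z, yX z, rX z)"
  by (simp add: hX_def MX_def xX_def yX_def rX_def)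

lemma part1:
  assumes bb: "butterfly_bond n p P d \<beta>" and iv: "isotropic v" and iw: "isotropic w" and M: "Mof \<beta> = outer v w"
  shows "\<exists>\<sigma> m. \<sigma> permutes {..<n} \<and> m \<le> n
                  \<and> on_line_parallel (\<lambda>i. p (\<sigma> i)) {..<m} (Smap w)
                  \<and> on_line_parallel (\<lambda>i. P (\<sigma> i)) {m..<n} (Smap v)"
proof -
  have X: "\<beta> \<in> Xvar" and h: "hX \<beta> = 0" and lf: "\<forall>i<n. lform (p i) (P i) (d i) \<beta> = 0"
    and bp: "butterfly_point \<beta>"
    using bb by (auto simp: butterfly_bond_def bonds_def KPi_def Bset_def hX_def)
  have MX: "MX \<beta> = outer v w" using M by (simp add: Mof_def MX_def)
  have bf: "(\<chi> i j. rX \<beta> * MX \<beta>$i$j + 2 * yX \<beta>$i * xX \<beta>$j) = (0::complex^3^3)"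
  proof -
    obtain h0 M0 x0 y0 r0 where e: "\<beta> = (h0,M0,x0,y0,r0)" by (metis prod.exhaust)
    show ?thesis using bp unfolding e by (simp add: butterfly_point_def hX_def MX_def xX_def yX_def rX_def)
  qed
  obtain lm mu where x: "xX \<beta> = mu *s w" and y: "yX \<beta> = lm *s v" and r: "rX \<beta> = -2*lm*mu"
    using butterfly_decomp[OF X h MX iv iw bf] by blast
  have beta: "\<beta> = (0, outer v w, mu *s w, lm *s v, -2*lm*mu)" using pt_split[of \<beta>] h MX x y r by simp
  have fac: "(lm + cdot w (cvec (p i))) * (mu + cdot v (cvec (P i))) = 0" if "i < n" for i
  proof -
    have "lform (p i) (P i) (d i) \<beta> = -2 * ((lm + cdot w (cvec (p i))) * (mu + cdot v (cvec (P i))))"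
      unfolding beta lform_bf by (simp add: algebra_simps)
    thus ?thesis using lf that by simp
  qed
  define I where "I = {i. i < n \<and> lm + cdot w (cvec (p i)) = 0}"
  obtain \<sigma> m where s: "\<sigma> permutes {..<n}" "m \<le> n" "\<forall>i<m. \<sigma> i \<in> I" "\<forall>i. m \<le> i \<and> i < n \<longrightarrow> \<sigma> i \<in> {..<n} - I"
    using perm_split[of I n] unfolding I_def by blast
  have "on_line_parallel (\<lambda>i. p (\<sigma> i)) {..<m} (Smap w)"
  proof (rule const_line[OF iw, where c = "-lm"], intro ballI)
    fix i assume "i \<in> {..<m}" hence "\<sigma> i \<in> I" using s(3) by simp
    thus "cdot w (cvec (p (\<sigma> i))) = - lm" unfolding I_def by (simp add: eq_neg_iff_add_eq_0 add.commute)
  qed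
  moreover have "on_line_parallel (\<lambda>i. P (\<sigma> i)) {m..<n} (Smap v)"
  proof (rule const_line[OF iv, where c = "-mu"], intro ballI)
    fix i assume "i \<in> {m..<n}" hence si: "\<sigma> i \<in> {..<n} - I" using s(4) by simp
    hence "mu + cdot v (cvec (P (\<sigma> i))) = 0" using fac[of "\<sigma> i"] unfolding I_def by auto
    thus "cdot v (cvec (P (\<sigma> i))) = - mu" by (simp add: eq_neg_iff_add_eq_0 add.commute)
  qed
  ultimately show ?thesis using s by blast
qed



definition upoly :: "(complex \<Rightarrow> complex) \<Rightarrow> bool" where
  "upoly g \<longleftrightarrow> (\<exists>p. \<forall>w. g w = poly p w)"
definition mpoly :: "((nat \<Rightarrow> complex) \<Rightarrow> complex) \<Rightarrow> bool" where
  "mpoly G \<longleftrightarrow> (\<forall>z k. upoly (\<lambda>w. G (z(k:=w))))"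

lemma upoly_const: "upoly (\<lambda>w. c)"
  unfolding upoly_def by (rule exI[of _ "[:c:]"]) simp
lemma upoly_id: "upoly (\<lambda>w. w)"
  unfolding upoly_def by (rule exI[of _ "[:0,1:]"]) simp
lemma upoly_add: "upoly f \<Longrightarrow> upoly g \<Longrightarrow> upoly (\<lambda>w. f w + g w)"
  unfolding upoly_def by (metis poly_add)
lemma upoly_mult: "upoly f \<Longrightarrow> upoly g \<Longrightarrow> upoly (\<lambda>w. f w * g w)"
  unfolding upoly_def by (metis poly_mult)

lemma mpoly_const: "mpoly (\<lambda>z. c)" by (simp add: mpoly_def upoly_const)
lemma mpoly_var: "mpoly (\<lambda>z. z j)"
  unfolding mpoly_def
proof (intro allI)
  fix z k show "upoly (\<lambda>w. (z(k := w)) j)"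
    by (cases "j = k") (simp_all add: upoly_id upoly_const)
qed
lemma mpoly_add: "mpoly F \<Longrightarrow> mpoly G \<Longrightarrow> mpoly (\<lambda>z. F z + G z)"
  unfolding mpoly_def by (simp add: upoly_add)
lemma mpoly_mult: "mpoly F \<Longrightarrow> mpoly G \<Longrightarrow> mpoly (\<lambda>z. F z * G z)"
  unfolding mpoly_def by (simp add: upoly_mult)
lemma mpoly_uminus: "mpoly F \<Longrightarrow> mpoly (\<lambda>z. - F z)"
  using mpoly_mult[OF mpoly_const[of "-1"]] by simp
lemma mpoly_diff: "mpoly F \<Longrightarrow> mpoly G \<Longrightarrow> mpoly (\<lambda>z. F z - G z)"
  using mpoly_add[OF _ mpoly_uminus] by simp
lemma mpoly_sum: "finite A \<Longrightarrow> (\<And>a. a \<in> A \<Longrightarrow> mpoly (F a)) \<Longrightarrow> mpoly (\<lambda>z. \<Sum>a\<in>A. F a z)"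
proof (induction A rule: finite_induct)
  case empty then show ?case by (simp add: mpoly_const)
next
  case (insert a A) then show ?case by (simp add: mpoly_add)
qed

lemma upoly_zero:
  assumes "upoly g" "\<And>x. g (complex_of_real x) = 0" shows "g w = 0"
proof -
  obtain p where p: "\<And>w. g w = poly p w" using assms(1) unfolding upoly_def by blast
  have "p = 0"
  proof (rule ccontr)
    assume "p \<noteq> 0"
    hence "finite {x. poly p x = 0}" by (rule poly_roots_finite)
    moreover have "range complex_of_real \<subseteq> {x. poly p x = 0}" using assms(2) p by auto
    ultimately have "finite (range complex_of_real)" by (rule finite_subset[rotated])
    moreover have "inj complex_of_real" by (simp add: inj_on_def)
    ultimately show False using finite_imageD infinite_UNIV_char_0 by (metis finite_imageD)
  qed
  thus ?thesis using p by simp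
qed

lemma mpoly_real_zero:
  assumes mp: "mpoly G" and r: "\<And>z. (\<forall>j. z j \<in> \<real>) \<Longrightarrow> G z = 0"
  shows "(\<forall>j\<ge>K. z j \<in> \<real>) \<Longrightarrow> G z = 0"
proof (induction K arbitrary: z)
  case 0 thus ?case using r by simp
next
  case (Suc K)
  have u: "upoly (\<lambda>w. G (z(K:=w)))" using mp unfolding mpoly_def by blast
  have "G (z(K := complex_of_real x)) = 0" for x
    by (rule Suc.IH) (use Suc.prems in \<open>auto simp: Suc_le_eq\<close>)
  hence "G (z(K := z K)) = 0" by (rule upoly_zero[OF u])
  thus ?case by simp
qed



definition qmat :: "'a::comm_ring_1 \<Rightarrow> 'a \<Rightarrow> 'a \<Rightarrow> 'a \<Rightarrow> 'a^3^3" where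
  "qmat q0 q1 q2 q3 = vector [
     vector [q0*q0+q1*q1-q2*q2-q3*q3, 2*(q1*q2 - q0*q3), 2*(q1*q3+q0*q2)],
     vector [2*(q1*q2+q0*q3), q0*q0-q1*q1+q2*q2-q3*q3, 2*(q2*q3 - q0*q1)],
     vector [2*(q1*q3 - q0*q2), 2*(q2*q3+q0*q1), q0*q0-q1*q1-q2*q2+q3*q3]]"

definition qN :: "'a::comm_ring_1 \<Rightarrow> 'a \<Rightarrow> 'a \<Rightarrow> 'a \<Rightarrow> 'a" where
  "qN q0 q1 q2 q3 = q0*q0+q1*q1+q2*q2+q3*q3"

definition Phis :: "complex \<Rightarrow> complex \<Rightarrow> complex \<Rightarrow> complex \<Rightarrow> complex^3 \<Rightarrow> complex^3 \<Rightarrow> pt" where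
  "Phis q0 q1 q2 q3 t u = (let N = qN q0 q1 q2 q3; R = qmat q0 q1 q2 q3 in
     (N, R, - (transpose R *v t) - N *s u, N *s t + R *v u,
      N * cdot t t + 2 * cdot t (R *v u) + N * cdot u u))"

definition Phi :: "(nat \<Rightarrow> complex) \<Rightarrow> pt" where
  "Phi z = Phis (z 0) (z 1) (z 2) (z 3) (vector [z 4, z 5, z 6]) (vector [z 7, z 8, z 9])"

definition mvec :: "((nat \<Rightarrow> complex) \<Rightarrow> complex^3) \<Rightarrow> bool" where
  "mvec V \<longleftrightarrow> (\<forall>i. mpoly (\<lambda>z. V z $ i))"
definition mmat :: "((nat \<Rightarrow> complex) \<Rightarrow> complex^3^3) \<Rightarrow> bool" where
  "mmat M \<longleftrightarrow> (\<forall>i j. mpoly (\<lambda>z. M z $ i $ j))"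

lemma mvec_add: "mvec U \<Longrightarrow> mvec V \<Longrightarrow> mvec (\<lambda>z. U z + V z)"
  unfolding mvec_def by (simp add: mpoly_add)
lemma mvec_diff: "mvec U \<Longrightarrow> mvec V \<Longrightarrow> mvec (\<lambda>z. U z - V z)"
  unfolding mvec_def by (simp add: mpoly_diff)
lemma mvec_uminus: "mvec U \<Longrightarrow> mvec (\<lambda>z. - U z)"
  unfolding mvec_def by (simp add: mpoly_uminus)
lemma mvec_smult: "mpoly c \<Longrightarrow> mvec U \<Longrightarrow> mvec (\<lambda>z. c z *s U z)"
  unfolding mvec_def by (simp add: mpoly_mult)
lemma mvec_mv: "mmat M \<Longrightarrow> mvec U \<Longrightarrow> mvec (\<lambda>z. M z *v U z)"
  unfolding mvec_def mmat_def matrix_vector_mult_def by (simp add: mpoly_sum mpoly_mult)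
lemma mmat_transpose: "mmat M \<Longrightarrow> mmat (\<lambda>z. transpose (M z))"
  unfolding mmat_def transpose_def by simp
lemma mpoly_cdot: "mvec U \<Longrightarrow> mvec V \<Longrightarrow> mpoly (\<lambda>z. cdot (U z) (V z))"
  unfolding mvec_def cdot_def by (simp add: mpoly_sum mpoly_mult)

lemma mpoly_qN: "mpoly (\<lambda>z. qN (z 0) (z 1) (z 2) (z 3))"
  unfolding qN_def by (intro mpoly_add mpoly_mult mpoly_var)

lemma mmat_qmat: "mmat (\<lambda>z. qmat (z 0) (z 1) (z 2) (z 3))"
  unfolding mmat_def
proof (intro allI)
  fix i j :: 3
  show "mpoly (\<lambda>z. qmat (z 0) (z 1) (z 2) (z 3) $ i $ j)"
    using exhaust_3[of i] exhaust_3[of j]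
    by (auto simp: qmat_def intro!: mpoly_add mpoly_diff mpoly_mult mpoly_var mpoly_const)
qed

lemma mvec_vec3: "mvec (\<lambda>z. vector [z a, z b, z c])"
  unfolding mvec_def
proof
  fix i :: 3
  show "mpoly (\<lambda>z. (vector [z a, z b, z c] :: complex^3) $ i)"
    using exhaust_3[of i] by (auto simp: mpoly_var)
qed

lemma Phi_coords:
  "mpoly (\<lambda>z. hX (Phi z))" "mmat (\<lambda>z. MX (Phi z))" "mvec (\<lambda>z. xX (Phi z))"
  "mvec (\<lambda>z. yX (Phi z))" "mpoly (\<lambda>z. rX (Phi z))"
  unfolding Phi_def Phis_def Let_def hX_def MX_def xX_def yX_def rX_def fst_conv snd_conv
  by (intro mpoly_qN mmat_qmat mvec_diff mvec_uminus mvec_add mvec_smult mvec_mv mmat_transpose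
      mvec_vec3 mpoly_add mpoly_mult mpoly_cdot mpoly_const)+

lemma cpoly_Phi: "cpoly f \<Longrightarrow> mpoly (\<lambda>z. f (Phi z))"
proof (induction rule: cpoly.induct)
  case (cp_const c) show ?case by (rule mpoly_const)
next
  case cp_h show ?case using Phi_coords(1) by (simp add: case_prod_beta hX_def)
next
  case (cp_M i j) show ?case using Phi_coords(2) by (simp add: case_prod_beta MX_def mmat_def)
next
  case (cp_x i) show ?case using Phi_coords(3) by (simp add: case_prod_beta xX_def mvec_def)
next
  case (cp_y i) show ?case using Phi_coords(4) by (simp add: case_prod_beta yX_def mvec_def)
next
  case cp_r show ?case using Phi_coords(5) by (simp add: case_prod_beta rX_def)
next
  case (cp_add f g) thus ?case by (simp add: mpoly_add)
next
  case (cp_mult f g) thus ?case by (simp add: mpoly_mult)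
qed



lemma qorth1: "transpose (qmat a b c d) ** qmat a b c d = mat (qN a b c d * qN a b c d :: 'a::comm_ring_1)"
  unfolding vec_eq_iff forall_3
  by (simp add: matrix_matrix_mult_def transpose_def sum_3 mat_def qmat_def qN_def) (simp add: algebra_simps)

lemma qorth2: "qmat a b c d ** transpose (qmat a b c d) = mat (qN a b c d * qN a b c d :: 'a::comm_ring_1)"
  unfolding vec_eq_iff forall_3
  by (simp add: matrix_matrix_mult_def transpose_def sum_3 mat_def qmat_def qN_def) (simp add: algebra_simps)

lemma qdet: "det (qmat a b c d) = (qN a b c d)^3"
  by (simp add: det_3 qmat_def qN_def) (simp add: algebra_simps power3_eq_cube)

lemma det_scale3: "det (k *\<^sub>R (M::real^3^3)) = k^3 * det M"
  by (simp add: det_3) (simp add: algebra_simps power3_eq_cube)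

lemma qA_SO3:
  fixes a b c d :: real
  assumes N0: "qN a b c d \<noteq> 0"
  defines "A \<equiv> (1 / qN a b c d) *\<^sub>R qmat a b c d"
  shows "A \<in> SO3" and "transpose A ** A = mat 1"
proof -
  let ?N = "qN a b c d" and ?R = "qmat a b c d"
  have "transpose A ** A = (1 / ?N) *\<^sub>R ((1 / ?N) *\<^sub>R (transpose ?R ** ?R))"
    unfolding A_def transpose_scalar by (simp add: scalar_matrix_assoc matrix_scalar_ac)
  also have "\<dots> = mat 1" unfolding qorth1 using N0 by (simp add: vec_eq_iff mat_def)
  finally show o: "transpose A ** A = mat 1" .
  have "det A = (1/?N)^3 * ?N^3" unfolding A_def det_scale3 qdet by simp
  also have "\<dots> = 1" using N0 by (simp add: power_divide)
  finally have "det A = 1" .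
  thus "A \<in> SO3" using o by (simp add: SO3_def orthogonal_matrix)
qed

lemma cmat_qmat: "cmat (qmat a b c d) = qmat (complex_of_real a) (of_real b) (of_real c) (of_real d)"
  unfolding vec_eq_iff forall_3 by (simp add: cmat_def qmat_def)
lemma cN: "complex_of_real (qN a b c d) = qN (of_real a) (of_real b) (of_real c) (of_real d)"
  by (simp add: qN_def)
lemma cvec_mv: "cvec (B *v x) = cmat B *v cvec x"
  by (simp add: vec_eq_iff cvec_def cmat_def matrix_vector_mult_def)
lemma cmat_transpose: "transpose (cmat B) = cmat (transpose B)"
  by (simp add: vec_eq_iff cmat_def transpose_def)
lemma cvec_uminus: "cvec (- a) = - cvec a" by (simp add: cvec_def vec_eq_iff)
lemma cdot_cvec: "cdot (cvec a) (cvec b) = of_real (a \<bullet> b)"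
  by (simp add: cdot_def cvec_def inner_vec_def)

lemma cdot_cvec_mv: "cdot (cvec a) (cmat B *v cvec x) = of_real (a \<bullet> (B *v x))"
  by (simp add: cvec_mv[symmetric] cdot_cvec)

lemma pscale_real: "pscale (complex_of_real k) (iso_point A t) =
   (of_real k, cmat (k *\<^sub>R A), cvec (k *\<^sub>R (- (transpose A *v t))), cvec (k *\<^sub>R t), of_real (k * (t \<bullet> t)))"
  by (simp add: pscale_def iso_point_def cmat_def cvec_def vec_eq_iff)

lemma Phis_real:
  fixes a b c d :: real
  assumes N0: "qN a b c d \<noteq> 0"
  defines "A \<equiv> (1 / qN a b c d) *\<^sub>R qmat a b c d"
  shows "Phis (of_real a) (of_real b) (of_real c) (of_real d) (cvec t) (cvec u)
          = pscale (of_real (qN a b c d)) (iso_point A (t + A *v u))"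
proof -
  let ?N = "qN a b c d" and ?R = "qmat a b c d"
  have AtA: "transpose A ** A = mat 1" using qA_SO3(2)[OF N0] unfolding A_def .
  have NA: "?N *\<^sub>R A = ?R" using N0 by (simp add: A_def)
  have X: "?N *\<^sub>R (- (transpose A *v (t + A *v u))) = - (transpose ?R *v t) - ?N *\<^sub>R u"
  proof -
    have "transpose A *v (t + A *v u) = transpose A *v t + u"
      by (simp add: matrix_vector_right_distrib matrix_vector_mul_assoc AtA del: transpose_matrix_vector)
    moreover have "?N *\<^sub>R (transpose A *v t) = transpose ?R *v t"
      by (simp add: scaleR_matrix_vector_assoc transpose_scalar[symmetric] NA del: transpose_matrix_vector)
    ultimately show ?thesis by (simp add: scaleR_add_right scaleR_right_diff_distrib del: transpose_matrix_vector)
  qed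
  have Y: "?N *\<^sub>R (t + A *v u) = ?N *\<^sub>R t + ?R *v u"
    by (simp add: scaleR_add_right scaleR_matrix_vector_assoc NA)
  have Rr: "?N * ((t + A *v u) \<bullet> (t + A *v u)) = ?N * (t \<bullet> t) + 2 * (t \<bullet> (?R *v u)) + ?N * (u \<bullet> u)"
  proof -
    have uu: "(A *v u) \<bullet> (A *v u) = u \<bullet> u"
    proof -
      have "(A *v u) \<bullet> (A *v u) = u \<bullet> (transpose A *v (A *v u))"
        by (metis dot_lmul_matrix inner_commute transpose_matrix_vector)
      thus ?thesis by (simp add: matrix_vector_mul_assoc AtA del: transpose_matrix_vector)
    qed
    have tu: "?N * (t \<bullet> (A *v u)) = t \<bullet> (?R *v u)"
      by (metis NA inner_scaleR_right scaleR_matrix_vector_assoc)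
    show ?thesis using uu tu by (simp add: inner_add_left inner_add_right inner_commute algebra_simps)
  qed
  have Rc: "complex_of_real ?N * of_real ((t + A *v u) \<bullet> (t + A *v u)) = of_real ?N * of_real (t \<bullet> t) + 2 * of_real (t \<bullet> (?R *v u)) + of_real ?N * of_real (u \<bullet> u)"
    using arg_cong[OF Rr, of complex_of_real] by simp
  show ?thesis
    unfolding pscale_real Phis_def Let_def NA X Y
    by (simp add: cN[symmetric] cmat_qmat[symmetric] cvec_diff cvec_uminus cvec_mv cmat_transpose
        cvec_scaleR cvec_add cdot_cvec cdot_cvec_mv Rc del: transpose_matrix_vector)
qed



lemma real_of_Re: "x \<in> \<real> \<Longrightarrow> x = complex_of_real (Re x)"
  by (metis Reals_cases Re_complex_of_real)

lemma qN_real_zero: "qN (a::real) b c d = 0 \<Longrightarrow> a = 0 \<and> b = 0 \<and> c = 0 \<and> d = 0"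
proof -
  assume h: "qN a b c d = 0"
  have "a*a = 0" "b*b = 0" "c*c = 0" "d*d = 0"
    using h zero_le_square[of a] zero_le_square[of b] zero_le_square[of c] zero_le_square[of d]
    unfolding qN_def by linarith+
  thus ?thesis by simp
qed

lemma qmat0: "qmat 0 0 0 0 = (0::'a::comm_ring_1^3^3)"
  unfolding vec_eq_iff forall_3 by (simp add: qmat_def)
lemma cdot0: "cdot 0 u = 0" "cdot u 0 = 0" by (simp_all add: cdot_def)

lemma zero_SO3: "mat 1 \<in> SO3"
  by (simp add: SO3_def orthogonal_matrix_id)

lemma Phi_real_cone:
  assumes "\<forall>j. z j \<in> \<real>" shows "Phi z \<in> iso_cone"
proof -
  define a where "a j = Re (z j)" for j
  have za: "z j = of_real (a j)" for j unfolding a_def using assms by (intro real_of_Re) blast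
  define t where "t = (vector [a 4, a 5, a 6] :: real^3)"
  define u where "u = (vector [a 7, a 8, a 9] :: real^3)"
  have tv: "vector [z 4, z 5, z 6] = cvec t" by (simp add: vec3_eq cvec_def t_def za)
  have uv: "vector [z 7, z 8, z 9] = cvec u" by (simp add: vec3_eq cvec_def u_def za)
  have P: "Phi z = Phis (of_real (a 0)) (of_real (a 1)) (of_real (a 2)) (of_real (a 3)) (cvec t) (cvec u)"
    unfolding Phi_def tv uv by (simp add: za)
  show ?thesis
  proof (cases "qN (a 0) (a 1) (a 2) (a 3) = 0")
    case False
    define A where "A = (1 / qN (a 0) (a 1) (a 2) (a 3)) *\<^sub>R qmat (a 0) (a 1) (a 2) (a 3)"
    have "A \<in> SO3" using qA_SO3(1)[OF False] unfolding A_def .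
    moreover have "Phi z = pscale (of_real (qN (a 0) (a 1) (a 2) (a 3))) (iso_point A (t + A *v u))"
      unfolding P A_def by (rule Phis_real[OF False])
    ultimately show ?thesis unfolding iso_cone_def by blast
  next
    case True
    hence z0: "a 0 = 0" "a 1 = 0" "a 2 = 0" "a 3 = 0" using qN_real_zero by blast+
    have "Phi z = pscale 0 (iso_point (mat 1) 0)"
    proof -
      have "Phi z = (0, 0, 0, 0, 0)" unfolding P z0 by (simp add: Phis_def qN_def qmat0 Let_def cdot0)
      moreover have "pscale 0 (iso_point (mat 1) 0) = (0, 0, 0, 0, 0)"
        by (simp add: pscale_def iso_point_def vec_eq_iff)
      ultimately show ?thesis by simp
    qed
    thus ?thesis using zero_SO3 unfolding iso_cone_def by blast
  qed
qed

lemma Phi_Xvar: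
  assumes "Phi z \<noteq> pt_zero" shows "Phi z \<in> Xvar"
proof -
  define z' where "z' j = (if j < 10 then z j else 0)" for j
  have e: "Phi z' = Phi z" by (simp add: Phi_def z'_def)
  have "\<forall>f. cpoly f \<and> (\<forall>s\<in>iso_cone. f s = 0) \<longrightarrow> f (Phi z) = 0"
  proof (intro allI impI, elim conjE)
    fix f assume cf: "cpoly f" and v: "\<forall>s\<in>iso_cone. f s = 0"
    have "(\<lambda>z. f (Phi z)) z' = 0"
    proof (rule mpoly_real_zero[OF cpoly_Phi[OF cf], where K=10])
      fix y :: "nat \<Rightarrow> complex" assume "\<forall>j. y j \<in> \<real>"
      thus "f (Phi y) = 0" using v Phi_real_cone by blast
    next
      show "\<forall>j\<ge>10. z' j \<in> \<real>" by (simp add: z'_def)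
    qed
    thus "f (Phi z) = 0" using e by simp
  qed
  thus ?thesis using assms unfolding Xvar_def zariski_closure_def by blast
qed



lemma quat_outer:
  fixes v w :: "complex^3"
  assumes vv: "cdot v v = 0" and ww: "cdot w w = 0"
  defines "c \<equiv> cdot v w"
  shows "qmat (-c) (v$2*w$3 - v$3*w$2) (v$3*w$1 - v$1*w$3) (v$1*w$2 - v$2*w$1) = outer ((4*c) *s v) w"
    and "qN (-c) (v$2*w$3 - v$3*w$2) (v$3*w$1 - v$1*w$3) (v$1*w$2 - v$2*w$1) = 0"
proof -
  have a: "v$1* v$1+v$2* v$2+v$3* v$3 = 0" "w$1*w$1+w$2*w$2+w$3*w$3 = 0" using vv ww by (simp_all add: cdot3)
  have c: "c = v$1*w$1+v$2*w$2+v$3*w$3" by (simp add: c_def cdot3)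
  show "qN (-c) (v$2*w$3 - v$3*w$2) (v$3*w$1 - v$1*w$3) (v$1*w$2 - v$2*w$1) = 0"
    unfolding qN_def c using a by algebra
  show "qmat (-c) (v$2*w$3 - v$3*w$2) (v$3*w$1 - v$1*w$3) (v$1*w$2 - v$2*w$1) = outer ((4*c) *s v) w"
    unfolding vec_eq_iff forall_3 qmat_def outer_def c
    by (simp only: vector_3 vec_lambda_beta vector_smult_component) (intro conjI; ((simp add: algebra_simps; fail) | (use a in algebra)))
qed

lemma quat_outer2:
  fixes w :: "complex^3"
  assumes ww: "cdot w w = 0"
  shows "qmat 0 (w$1) (w$2) (w$3) = outer (2 *s w) w" and "qN 0 (w$1) (w$2) (w$3) = 0"
proof -
  have a: "w$1*w$1+w$2*w$2+w$3*w$3 = 0" using ww by (simp add: cdot3)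
  show "qN 0 (w$1) (w$2) (w$3) = 0" unfolding qN_def using a by simp
  show "qmat 0 (w$1) (w$2) (w$3) = outer (2 *s w) w"
    unfolding vec_eq_iff forall_3 qmat_def outer_def
    by (simp only: vector_3 vec_lambda_beta vector_smult_component) (intro conjI; ((simp add: algebra_simps; fail) | (use a in algebra)))
qed



lemma isotropic_scale: "isotropic v \<Longrightarrow> c \<noteq> 0 \<Longrightarrow> isotropic (c *s v)"
  by (auto simp: isotropic_def cdot_smult_left cdot_smult_right vec_eq_iff)

lemma realize:
  assumes iv0: "isotropic v0" and iw0: "isotropic w0"
  shows "\<exists>q0 q1 q2 q3 v w. qN q0 q1 q2 q3 = 0 \<and> qmat q0 q1 q2 q3 = outer v w \<and> isotropic v \<and> isotropic w
     \<and> Smap v = Smap v0 \<and> Smap w = Smap w0"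
proof (cases "cdot v0 w0 = 0")
  case False
  let ?c = "cdot v0 w0"
  have vv: "cdot v0 v0 = 0" and ww: "cdot w0 w0 = 0" using iv0 iw0 by (auto simp: isotropic_def)
  note Q = quat_outer[OF vv ww]
  have "isotropic ((4 * ?c) *s v0)" using isotropic_scale[OF iv0] False by simp
  moreover have "Smap ((4 * ?c) *s v0) = Smap v0" using Smap_scale False by simp
  ultimately show ?thesis using Q iw0 by blast
next
  case True
  have vv: "cdot v0 v0 = 0" and ww: "cdot w0 w0 = 0" using iv0 iw0 by (auto simp: isotropic_def)
  obtain mu where mu: "v0 = mu *s w0" using iso_par[OF iw0 vv] True cdot_comm by metis
  have "mu \<noteq> 0" using iv0 mu by (auto simp: isotropic_def)
  hence "Smap v0 = Smap w0" using mu Smap_scale by simp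
  moreover have "Smap (2 *s w0) = Smap w0" using Smap_scale by simp
  moreover have "isotropic (2 *s w0)" using isotropic_scale[OF iw0] by simp
  ultimately show ?thesis using quat_outer2[OF ww] iw0 by metis
qed

lemma outer_mv: "outer v w *v u = cdot w u *s v"
  by (simp add: outer_def matrix_vector_mult_def cdot_def vec_eq_iff sum_distrib_left ac_simps)
lemma outer_tmv: "transpose (outer v w) *v t = cdot v t *s w"
  by (simp add: outer_def matrix_vector_mult_def transpose_def cdot_def vec_eq_iff sum_distrib_left ac_simps
      del: transpose_matrix_vector)

lemma outer_nz: "v \<noteq> 0 \<Longrightarrow> w \<noteq> 0 \<Longrightarrow> outer v w \<noteq> 0"
proof -
  assume "v \<noteq> 0" "w \<noteq> 0"
  then obtain a b where "v$a \<noteq> 0" "w$b \<noteq> 0" using vec3_ne0 by blast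
  hence "outer v w $ a $ b \<noteq> 0" by (simp add: outer_def)
  thus ?thesis by auto
qed

lemma part2:
  assumes nL: "norm L = 1" and nR: "norm R = 1" and mn: "m \<le> n"
    and lp: "on_line_parallel p {..<m} L" and lP: "on_line_parallel P {m..<n} R"
  shows "\<exists>\<beta> v w. butterfly_bond n p P d \<beta> \<and> isotropic v \<and> isotropic w
                  \<and> Mof \<beta> = outer v w \<and> Smap w = L \<and> Smap v = R"
proof -
  obtain w0 where iw0: "isotropic w0" and w0: "Smap w0 = L" using Smap_onto[OF nL] by blast
  obtain v0 where iv0: "isotropic v0" and v0: "Smap v0 = R" using Smap_onto[OF nR] by blast
  obtain q0 q1 q2 q3 v w where N: "qN q0 q1 q2 q3 = 0" and Q: "qmat q0 q1 q2 q3 = outer v w"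
    and iv: "isotropic v" and iw: "isotropic w" and sv: "Smap v = R" and sw: "Smap w = L"
    using realize[OF iv0 iw0] v0 w0 by metis
  define a0 where "a0 = (SOME a. \<forall>i\<in>{..<m}. \<exists>t::real. p i = a + t *\<^sub>R Smap w)"
  define A0 where "A0 = (SOME a. \<forall>i\<in>{m..<n}. \<exists>t::real. P i = a + t *\<^sub>R Smap v)"
  have cp: "\<forall>i\<in>{..<m}. cdot w (cvec (p i)) = cdot w (cvec a0)"
    using line_const[OF iw] lp sw unfolding a0_def by simp
  have cP: "\<forall>i\<in>{m..<n}. cdot v (cvec (P i)) = cdot v (cvec A0)"
    using line_const[OF iv] lP sv unfolding A0_def by simp
  define t where "t = cvec A0"
  define u where "u = - cvec a0"
  define z where "z j = [q0,q1,q2,q3, t$1,t$2,t$3, u$1,u$2,u$3] ! j" for j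
  define lm where "lm = cdot w u"
  define mu where "mu = - cdot v t"
  have tz: "vector [z 4, z 5, z 6] = t" by (simp add: z_def vec3_eq)
  have uz: "vector [z 7, z 8, z 9] = u" by (simp add: z_def vec3_eq)
  have Pz: "Phi z = Phis q0 q1 q2 q3 t u" unfolding Phi_def tz uz by (simp add: z_def)
  have beta: "Phi z = (0, outer v w, mu *s w, lm *s v, -2*lm*mu)"
  proof -
    have "cdot t (cdot w u *s v) = cdot w u * cdot v t" by (simp add: cdot_smult_right cdot_comm)
    thus ?thesis unfolding Pz Phis_def Let_def N Q outer_mv outer_tmv mu_def lm_def
      by (simp add: vec_eq_iff)
  qed
  from iv iw have v0': "v \<noteq> 0" and w0': "w \<noteq> 0" by (auto simp: isotropic_def)
  have nz: "Phi z \<noteq> pt_zero" using outer_nz[OF v0' w0'] beta by (simp add: pt_zero_def)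
  have X: "Phi z \<in> Xvar" by (rule Phi_Xvar[OF nz])
  have lf: "\<forall>i<n. lform (p i) (P i) (d i) (Phi z) = 0"
  proof (intro allI impI)
    fix i assume "i < n"
    have e: "lform (p i) (P i) (d i) (Phi z) = -2 * ((lm + cdot w (cvec (p i))) * (mu + cdot v (cvec (P i))))"
      unfolding beta lform_bf by (simp add: algebra_simps)
    show "lform (p i) (P i) (d i) (Phi z) = 0"
    proof (cases "i < m")
      case True
      hence "lm + cdot w (cvec (p i)) = 0" using cp unfolding lm_def u_def
        by (simp add: cdot_def sum_negf)
      thus ?thesis using e by simp
    next
      case False
      hence "mu + cdot v (cvec (P i)) = 0" using cP \<open>i < n\<close> unfolding mu_def t_def by simp
      thus ?thesis using e by simp
    qed
  qed
  have bb: "butterfly_bond n p P d (Phi z)"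
    unfolding butterfly_bond_def bonds_def KPi_def Bset_def butterfly_point_def
    using X lf beta outer_nz[OF v0' w0'] by (simp add: vec_eq_iff outer_def algebra_simps)
  moreover have "Mof (Phi z) = outer v w" using beta by (simp add: Mof_def)
  ultimately show ?thesis using iv iw sv sw by blast
qed

theorem mainTheorem5:
  fixes n :: nat and p P :: "nat \<Rightarrow> real^3" and d :: "nat \<Rightarrow> real"
  assumes "\<forall>i<n. d i \<ge> 0"
  shows "(\<forall>\<beta> v w. butterfly_bond n p P d \<beta> \<and> isotropic v \<and> isotropic w \<and> Mof \<beta> = outer v w
            \<longrightarrow> (\<exists>\<sigma> m. \<sigma> permutes {..<n} \<and> m \<le> n
                  \<and> on_line_parallel (\<lambda>i. p (\<sigma> i)) {..<m} (Smap w)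
                  \<and> on_line_parallel (\<lambda>i. P (\<sigma> i)) {m..<n} (Smap v)))
       \<and> (\<forall>L R m. norm L = 1 \<and> norm R = 1 \<and> m \<le> n
            \<and> on_line_parallel p {..<m} L \<and> on_line_parallel P {m..<n} R
            \<longrightarrow> (\<exists>\<beta> v w. butterfly_bond n p P d \<beta> \<and> isotropic v \<and> isotropic w
                  \<and> Mof \<beta> = outer v w \<and> Smap w = L \<and> Smap v = R))"
  using part1 part2 by blast

end
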